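(* In the setting below, for all $r>0$ and all $m\in\mathbb{N}$: $$\mathbb{E}\big[\mathbb{I}_{B_r}(X^x_m)|\eta(X^x_m)-\eta(x)|\big]\le m\,\mathbb{E}\big[\mathbb{I}_{B_r}(X)|\eta(X)-\eta(x)|\big],$$ $$\mathbb{E}\big[\mathbb{I}_{S_r}(X^x_m)|\eta(X^x_m)-\eta(x)|\big]\le 2\|\eta\|_\infty\, m\,\mathbb{P}_X(S_r)\exp\big(-(m-1)\mathbb{P}_X(B_r)\big),$$ $$\mathbb{E}\big[\mathbb{I}_{\mathcal{X}\setminus\bar B_r}(X^x_m)|\eta(X^x_m)-\eta(x)|\big]\le 2\|\eta\|_\infty\exp\big(-m\,\mathbb{P}_X(\bar B_r)\big).$$
   Context: Let $(\mathcal{X},d)$ be a metric space with its Borel $\sigma$-algebra, let $(\Omega,\mathcal{F},\mathbb{P})$ be a probability space, and let $X,X_1,X_2,\dots$ be i.i.d. $\mathcal{X}$-valued random variables with common law $\mathbb{P}_X$. For $x\in\mathcal{X}$ and $r>0$ write $B_r=\{x':d(x,x')<r\}$, $\bar B_r=\{x':d(x,x')\le r\}$ and $S_r=\{x':d(x,x')=r\}$. The support of $\mathbb{P}_X$ is the set of $x$ such that $\mathbb{P}_X(\bar B_r(x))>0$ for all $r>0$. Fix $x$ in the support of $\mathbb{P}_X$ and a bounded measurable $\eta:\mathcal{X}\to\mathbb{R}$, with $\|\eta\|_\infty$ its supremum norm. For each $m\in\mathbb{N}$, a nearest neighbor of $x$ among $X_1,\dots,X_m$ is a measurable $X^x_m:\Omega\to\mathcal{X}$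 with $X^x_m(\omega)\in\arg\min_{x'\in\{X_1(\omega),\dots,X_m(\omega)\}}d(x,x')$ for every $\omega\in\Omega$; fix such a sequence $(X^x_m)_{m\in\mathbb{N}}$. *)

theory Defs
  imports "HOL-Probability.Probability"
begin

definition sup_norm :: "('a \<Rightarrow> real) \<Rightarrow> real" where
  "sup_norm f = (SUP y. \<bar>f y\<bar>)"

end

theory Submission
  imports Defs
begin
lemma (in prob_space) indep_prod:
  assumes "indep_vars (\<lambda>_. borel) Z I" "finite J" "J \<noteq> {}" "J \<subseteq> I"
    "\<And>j. j \<in> J \<Longrightarrow> A j \<in> sets borel"
  shows "prob (\<Inter>j\<in>J. {\<omega>\<in>space M. Z j \<omega> \<in> A j}) = (\<Prod>j\<in>J. prob {\<omega>\<in>space M. Z j \<omega> \<in> A j})"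
proof -
  have "indep_sets (\<lambda>i. { Z i -` A \<inter> space M | A. A \<in> sets borel}) I"
    using assms(1) unfolding indep_vars_def2 by simp
  from indep_setsD[OF this assms(4,3,2), of "\<lambda>j. Z j -` A j \<inter> space M"] assms(5)
  have "prob (\<Inter>j\<in>J. Z j -` A j \<inter> space M) = (\<Prod>j\<in>J. prob (Z j -` A j \<inter> space M))"
    by blast
  moreover have "\<And>j. {\<omega>\<in>space M. Z j \<omega> \<in> A j} = Z j -` A j \<inter> space M" by auto
  ultimately show ?thesis by simp
qed

lemma (in prob_space) exp_le_prob:
  fixes f :: "'a \<Rightarrow> real"
  assumes "f \<in> borel_measurable M" "E \<in> events" "C \<ge> 0"
    "\<And>\<omega>. \<omega> \<in> space M \<Longrightarrow> \<bar>f \<omega>\<bar> \<le> C * indicator E \<omega>"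
  shows "expectation f \<le> C * prob E"
proof -
  have b: "\<And>\<omega>. \<omega> \<in> space M \<Longrightarrow> norm (f \<omega>) \<le> C"
    using assms(3,4) by (smt (verit) indicator_le_1 mult_left_le real_norm_def)
  have "integrable M f"
    by (rule integrable_const_bound[where B=C]) (use b assms(1) in auto)
  moreover have "integrable M (\<lambda>\<omega>. C * indicator E \<omega>)"
    using assms(2) by (intro integrable_mult_right integrable_real_indicator) (auto simp: less_top[symmetric])
  ultimately have "expectation f \<le> expectation (\<lambda>\<omega>. C * indicator E \<omega>)"
    by (intro integral_mono) (use assms(4) in fastforce)+
  also have "\<dots> = C * prob E" using assms(2) by simp
  finally show ?thesis .
qed

lemma prod_if_one:
  fixes a b :: real
  assumes "i \<in> {1..m::nat}"
  shows "(\<Prod>j\<in>{1..m}. if j = i then a else b) = a * b ^ (m - 1)"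
proof -
  have "(\<Prod>j\<in>{1..m}. if j = i then a else b) = a * (\<Prod>j\<in>{1..m}-{i}. if j = i then a else b)"
    using assms by (subst prod.remove[of _ i]) auto
  also have "(\<Prod>j\<in>{1..m}-{i}. if j = i then a else b) = (\<Prod>j\<in>{1..m}-{i}. b)"
    by (rule prod.cong) auto
  also have "\<dots> = b ^ (m - 1)" using assms by simp
  finally show ?thesis .
qed

theorem mainTheorem3:
  fixes M :: "'w measure" and X :: "'w \<Rightarrow> 'a::metric_space"
    and Xs :: "nat \<Rightarrow> 'w \<Rightarrow> 'a" and NN :: "nat \<Rightarrow> 'w \<Rightarrow> 'a"
    and x :: 'a and \<eta> :: "'a \<Rightarrow> real" and r :: real and m :: nat
  assumes "prob_space M"
    and X_meas: "X \<in> measurable M borel"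
    and Xs_meas: "\<And>i. Xs i \<in> measurable M borel"
    and indep: "prob_space.indep_vars M (\<lambda>_. borel) (\<lambda>i. if i = 0 then X else Xs i) UNIV"
    and ident: "\<And>i. i \<ge> 1 \<Longrightarrow> distr M borel (Xs i) = distr M borel X"
    and supp: "\<And>\<rho>. \<rho> > 0 \<Longrightarrow> measure (distr M borel X) (cball x \<rho>) > 0"
    and eta_meas: "\<eta> \<in> borel_measurable borel"
    and eta_bdd: "bounded (range \<eta>)"
    and NN_meas: "\<And>k. k \<ge> 1 \<Longrightarrow> NN k \<in> measurable M borel"
    and NN_min: "\<And>k \<omega>. k \<ge> 1 \<Longrightarrow> \<omega> \<in> space M \<Longrightarrow>
        is_arg_min (dist x) (\<lambda>y. y \<in> {Xs i \<omega> | i. i \<in> {1..k}}) (NN k \<omega>)"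
    and "r > 0" and "m \<ge> 1"
  shows "(prob_space.expectation M (\<lambda>\<omega>. indicator (ball x r) (NN m \<omega>) * \<bar>\<eta> (NN m \<omega>) - \<eta> x\<bar>)
           \<le> real m * prob_space.expectation M (\<lambda>\<omega>. indicator (ball x r) (X \<omega>) * \<bar>\<eta> (X \<omega>) - \<eta> x\<bar>)) \<and>
         (prob_space.expectation M (\<lambda>\<omega>. indicator (sphere x r) (NN m \<omega>) * \<bar>\<eta> (NN m \<omega>) - \<eta> x\<bar>)
           \<le> 2 * sup_norm \<eta> * real m * measure (distr M borel X) (sphere x r)
              * exp (- (real m - 1) * measure (distr M borel X) (ball x r))) \<and>
         (prob_space.expectation M (\<lambda>\<omega>. indicator (UNIV - cball x r) (NN m \<omega>) * \<bar>\<eta> (NN m \<omega>) - \<eta> x\<bar>)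
           \<le> 2 * sup_norm \<eta> * exp (- real m * measure (distr M borel X) (cball x r)))"
proof -
  interpret P: prob_space M by fact
  let ?\<mu> = "distr M borel X"
  interpret Q: prob_space ?\<mu> by (rule P.prob_space_distr[OF X_meas])
  define Z where "Z = (\<lambda>i. if i = 0 then X else Xs i)"
  have Zi: "\<And>i. i \<ge> 1 \<Longrightarrow> Z i = Xs i" unfolding Z_def by auto
  have indZ: "P.indep_vars (\<lambda>_. borel) Z {1..m}"
    using P.indep_vars_subset[OF indep[folded Z_def]] by auto
  have sphB[simp]: "sphere x r \<in> sets borel" 
  proof -
    have "sphere x r = cball x r - ball x r" by auto
    then show ?thesis by simp
  qed
  define g where "g = (\<lambda>A a. indicator A a * \<bar>\<eta> a - \<eta> x\<bar>)"
  have gmeas: "\<And>A. A \<in> sets borel \<Longrightarrow> g A \<in> borel_measurable borel"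
    unfolding g_def using eta_meas
    by (intro borel_measurable_times borel_measurable_indicator borel_measurable_abs borel_measurable_diff) auto
  have gmeasT: "\<And>A T. A \<in> sets borel \<Longrightarrow> T \<in> measurable M borel \<Longrightarrow> (\<lambda>\<omega>. g A (T \<omega>)) \<in> borel_measurable M"
    using gmeas measurable_compose by blast
  obtain B where B: "\<And>y. \<bar>\<eta> y\<bar> \<le> B"
    using eta_bdd unfolding bounded_iff by auto
  have bdd: "bdd_above (range (\<lambda>y. \<bar>\<eta> y\<bar>))" using B by (intro bdd_aboveI2) auto
  have supn: "\<And>y. \<bar>\<eta> y\<bar> \<le> sup_norm \<eta>"
    unfolding sup_norm_def using bdd by (intro cSUP_upper) auto
  have supn0: "0 \<le> sup_norm \<eta>" using supn[of x] by linarith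
  have supn2: "0 \<le> 2 * sup_norm \<eta>" using supn0 by simp
  have bnd: "\<bar>\<eta> a - \<eta> x\<bar> \<le> 2 * sup_norm \<eta>" for a
    using supn[of a] supn[of x] by linarith
  have gbnd: "\<And>A a. \<bar>g A a\<bar> \<le> 2 * sup_norm \<eta> * indicator A a"
    unfolding g_def using bnd by (auto simp: indicator_def)
  have probXs: "\<And>i A. i \<ge> 1 \<Longrightarrow> A \<in> sets borel \<Longrightarrow> P.prob {\<omega>\<in>space M. Xs i \<omega> \<in> A} = measure ?\<mu> A"
  proof -
    fix i :: nat and A :: "'a set" assume "i \<ge> 1" "A \<in> sets borel"
    have "measure ?\<mu> A = measure (distr M borel (Xs i)) A" using ident[OF \<open>i \<ge> 1\<close>] by simp
    also have "\<dots> = P.prob (Xs i -` A \<inter> space M)"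
      by (rule measure_distr[OF Xs_meas \<open>A \<in> sets borel\<close>])
    finally show "P.prob {\<omega>\<in>space M. Xs i \<omega> \<in> A} = measure ?\<mu> A"
      by (simp add: Collect_conj_eq vimage_def Int_commute Collect_mem_eq)
  qed
  have compl: "\<And>A. A \<in> sets borel \<Longrightarrow> measure ?\<mu> (UNIV - A) = 1 - measure ?\<mu> A"
    using Q.prob_compl by simp
  have argmin: "\<And>\<omega> j. \<omega> \<in> space M \<Longrightarrow> j \<in> {1..m} \<Longrightarrow> dist x (NN m \<omega>) \<le> dist x (Xs j \<omega>)"
    using NN_min \<open>m \<ge> 1\<close> unfolding is_arg_min_def by (metis (mono_tags, lifting) mem_Collect_eq not_le)
  have inset: "\<And>\<omega>. \<omega> \<in> space M \<Longrightarrow> \<exists>i\<in>{1..m}. NN m \<omega> = Xs i \<omega>"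
    using NN_min \<open>m \<ge> 1\<close> unfolding is_arg_min_def by blast
  have expeq: "\<And>i A. i \<ge> 1 \<Longrightarrow> A \<in> sets borel \<Longrightarrow>
      P.expectation (\<lambda>\<omega>. g A (Xs i \<omega>)) = P.expectation (\<lambda>\<omega>. g A (X \<omega>))"
  proof -
    fix i :: nat and A :: "'a set" assume "i \<ge> 1" "A \<in> sets borel"
    have "P.expectation (\<lambda>\<omega>. g A (Xs i \<omega>)) = integral\<^sup>L (distr M borel (Xs i)) (g A)"
      by (rule integral_distr[symmetric, OF Xs_meas gmeas[OF \<open>A \<in> sets borel\<close>]])
    also have "\<dots> = integral\<^sup>L ?\<mu> (g A)" using ident[OF \<open>i \<ge> 1\<close>] by simp
    also have "\<dots> = P.expectation (\<lambda>\<omega>. g A (X \<omega>))"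
      by (rule integral_distr[OF X_meas gmeas[OF \<open>A \<in> sets borel\<close>]])
    finally show "P.expectation (\<lambda>\<omega>. g A (Xs i \<omega>)) = P.expectation (\<lambda>\<omega>. g A (X \<omega>))" .
  qed
  have intg: "\<And>A T. A \<in> sets borel \<Longrightarrow> T \<in> measurable M borel \<Longrightarrow> integrable M (\<lambda>\<omega>. g A (T \<omega>))"
  proof -
    fix A :: "'a set" and T :: "'w \<Rightarrow> 'a" assume a: "A \<in> sets borel" "T \<in> measurable M borel"
    have gb2: "norm (g A (T \<omega>)) \<le> 2 * sup_norm \<eta>" for \<omega>
      using gbnd[of A "T \<omega>"] supn0 by (cases "T \<omega> \<in> A") auto
    show "integrable M (\<lambda>\<omega>. g A (T \<omega>))"
      by (rule P.integrable_const_bound[where B="2 * sup_norm \<eta>"])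
         (use gb2 gmeasT[OF a] in auto)
  qed
  have NNm: "NN m \<in> measurable M borel" using NN_meas \<open>m \<ge> 1\<close> by blast
  have Eevg: "{\<omega>\<in>space M. NN m \<omega> \<in> A} \<in> P.events" if "A \<in> sets borel" for A
  proof -
    have "{\<omega>\<in>space M. NN m \<omega> \<in> A} = NN m -` A \<inter> space M" by auto
    then show ?thesis using measurable_sets[OF NNm that] by simp
  qed
  have gE: "\<bar>g A (NN m \<omega>)\<bar> \<le> 2 * sup_norm \<eta> * indicator {\<omega>\<in>space M. NN m \<omega> \<in> A} \<omega>"
    if "\<omega> \<in> space M" for A \<omega>
    using gbnd[of A "NN m \<omega>"] that by (simp add: indicator_def)
  have ZEv: "{\<omega>\<in>space M. Z j \<omega> \<in> A} \<in> P.events" if "j \<ge> 1" "A \<in> sets borel" for j A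
  proof -
    have "{\<omega>\<in>space M. Z j \<omega> \<in> A} = Xs j -` A \<inter> space M" using Zi[OF that(1)] by auto
    then show ?thesis using measurable_sets[OF Xs_meas that(2)] by simp
  qed
  have p1: "P.expectation (\<lambda>\<omega>. g (ball x r) (NN m \<omega>)) \<le> real m * P.expectation (\<lambda>\<omega>. g (ball x r) (X \<omega>))"
  proof -
    have "P.expectation (\<lambda>\<omega>. g (ball x r) (NN m \<omega>)) \<le> P.expectation (\<lambda>\<omega>. \<Sum>i\<in>{1..m}. g (ball x r) (Xs i \<omega>))"
    proof (rule integral_mono)
      show "integrable M (\<lambda>\<omega>. g (ball x r) (NN m \<omega>))" by (rule intg[OF _ NNm]) simp
      show "integrable M (\<lambda>\<omega>. \<Sum>i\<in>{1..m}. g (ball x r) (Xs i \<omega>))"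
        by (intro Bochner_Integration.integrable_sum intg Xs_meas) simp
      fix \<omega> assume "\<omega> \<in> space M"
      then obtain i where i: "i \<in> {1..m}" "NN m \<omega> = Xs i \<omega>" using inset by blast
      show "g (ball x r) (NN m \<omega>) \<le> (\<Sum>i\<in>{1..m}. g (ball x r) (Xs i \<omega>))"
        unfolding i(2) by (rule member_le_sum[OF i(1)]) (auto simp: g_def)
    qed
    also have "\<dots> = (\<Sum>i\<in>{1..m}. P.expectation (\<lambda>\<omega>. g (ball x r) (Xs i \<omega>)))"
      by (intro Bochner_Integration.integral_sum intg Xs_meas) simp
    also have "\<dots> = (\<Sum>i\<in>{1..m}. P.expectation (\<lambda>\<omega>. g (ball x r) (X \<omega>)))"
      by (intro sum.cong refl expeq) auto
    also have "\<dots> = real m * P.expectation (\<lambda>\<omega>. g (ball x r) (X \<omega>))" by simp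
    finally show ?thesis .
  qed
  have p3: "P.expectation (\<lambda>\<omega>. g (UNIV - cball x r) (NN m \<omega>))
      \<le> 2 * sup_norm \<eta> * exp (- real m * measure ?\<mu> (cball x r))"
  proof -
    let ?E = "{\<omega>\<in>space M. NN m \<omega> \<in> UNIV - cball x r}"
    let ?p = "measure ?\<mu> (cball x r)"
    have Eev: "?E \<in> P.events" by (rule Eevg) auto
    have "P.expectation (\<lambda>\<omega>. g (UNIV - cball x r) (NN m \<omega>)) \<le> 2 * sup_norm \<eta> * P.prob ?E"
      apply (rule P.exp_le_prob[OF _ Eev supn2])
       apply (rule gmeasT[OF _ NNm], simp)
      by (rule gE)
    also have "P.prob ?E \<le> P.prob (\<Inter>j\<in>{1..m}. {\<omega>\<in>space M. Z j \<omega> \<in> UNIV - cball x r})"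
    proof (rule P.finite_measure_mono)
      show "?E \<subseteq> (\<Inter>j\<in>{1..m}. {\<omega>\<in>space M. Z j \<omega> \<in> UNIV - cball x r})"
        using argmin Zi by (force simp: dist_commute)
      show "(\<Inter>j\<in>{1..m}. {\<omega>\<in>space M. Z j \<omega> \<in> UNIV - cball x r}) \<in> P.events"
        using \<open>m \<ge> 1\<close> by (intro sets.finite_INT ZEv) auto
    qed
    also have "\<dots> = (\<Prod>j\<in>{1..m}. P.prob {\<omega>\<in>space M. Z j \<omega> \<in> UNIV - cball x r})"
      by (rule P.indep_prod[OF indZ]) (use \<open>m \<ge> 1\<close> in auto)
    also have "\<dots> = (\<Prod>j\<in>{1..m}. 1 - ?p)"
    proof (intro prod.cong refl)
      fix j assume "j \<in> {1..m}" then have j: "j \<ge> 1" by simp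
      show "P.prob {\<omega>\<in>space M. Z j \<omega> \<in> UNIV - cball x r} = 1 - ?p"
        using probXs[OF j, of "UNIV - cball x r"] compl[of "cball x r"] Zi[OF j] by simp
    qed
    also have "\<dots> = (1 - ?p) ^ m" by simp
    also have "\<dots> \<le> exp (- ?p) ^ m"
      by (intro power_mono) (use exp_ge_add_one_self[of "- ?p"] Q.prob_le_1 in auto)
    also have "\<dots> = exp (- real m * ?p)" by (simp add: exp_of_nat_mult[symmetric])
    finally show ?thesis using supn0 by (simp add: mult_left_mono)
  qed
  have p2: "P.expectation (\<lambda>\<omega>. g (sphere x r) (NN m \<omega>))
      \<le> 2 * sup_norm \<eta> * real m * measure ?\<mu> (sphere x r) * exp (- (real m - 1) * measure ?\<mu> (ball x r))"
  proof -
    let ?E = "{\<omega>\<in>space M. NN m \<omega> \<in> sphere x r}"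
    let ?pS = "measure ?\<mu> (sphere x r)"
    let ?pB = "measure ?\<mu> (ball x r)"
    define A where "A = (\<lambda>i j::nat. if j = i then sphere x r else UNIV - ball x r)"
    have Ab: "\<And>i j::nat. A i j \<in> sets borel" unfolding A_def by auto
    define F where "F = (\<lambda>i::nat. \<Inter>j\<in>{1..m}. {\<omega>\<in>space M. Z j \<omega> \<in> A i j})"
    have Fev: "\<And>i. F i \<in> P.events" unfolding F_def
      using \<open>m \<ge> 1\<close> by (intro sets.finite_INT ZEv Ab) auto
    have Eev: "?E \<in> P.events" by (rule Eevg) auto
    have "P.expectation (\<lambda>\<omega>. g (sphere x r) (NN m \<omega>)) \<le> 2 * sup_norm \<eta> * P.prob ?E"
      apply (rule P.exp_le_prob[OF _ Eev supn2])
       apply (rule gmeasT[OF _ NNm], simp)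
      by (rule gE)
    also have "P.prob ?E \<le> P.prob (\<Union>i\<in>{1..m}. F i)"
    proof (rule P.finite_measure_mono)
      show "?E \<subseteq> (\<Union>i\<in>{1..m}. F i)"
      proof
        fix \<omega> assume w: "\<omega> \<in> ?E"
        then obtain i where i: "i \<in> {1..m}" "NN m \<omega> = Xs i \<omega>" using inset by blast
        have "\<omega> \<in> F i" unfolding F_def A_def
          using w i argmin[of \<omega>] Zi by (force simp: dist_commute)
        then show "\<omega> \<in> (\<Union>i\<in>{1..m}. F i)" using i by blast
      qed
      show "(\<Union>i\<in>{1..m}. F i) \<in> P.events" using Fev by auto
    qed
    also have "\<dots> \<le> (\<Sum>i\<in>{1..m}. P.prob (F i))"
      by (rule P.finite_measure_subadditive_finite) (use Fev in auto)
    also have "\<dots> = (\<Sum>i\<in>{1..m}. ?pS * (1 - ?pB) ^ (m - 1))"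
    proof (rule sum.cong[OF refl])
      fix i assume i: "i \<in> {1..m}"
      have "P.prob (F i) = (\<Prod>j\<in>{1..m}. P.prob {\<omega>\<in>space M. Z j \<omega> \<in> A i j})"
        unfolding F_def by (rule P.indep_prod[OF indZ]) (use \<open>m \<ge> 1\<close> Ab in auto)
      also have "\<dots> = (\<Prod>j\<in>{1..m}. if j = i then ?pS else 1 - ?pB)"
      proof (intro prod.cong refl)
        fix j assume "j \<in> {1..m}" then have j: "j \<ge> 1" by simp
        show "P.prob {\<omega>\<in>space M. Z j \<omega> \<in> A i j} = (if j = i then ?pS else 1 - ?pB)"
        proof (cases "j = i")
          case True then show ?thesis
            using probXs[OF j, of "sphere x r"] Zi[OF j] unfolding A_def by simp
        next
          case False then show ?thesis
            using probXs[OF j, of "UNIV - ball x r"] compl[of "ball x r"] Zi[OF j] unfolding A_def by simp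
        qed
      qed
      also have "\<dots> = ?pS * (1 - ?pB) ^ (m - 1)" by (rule prod_if_one[OF i])
      finally show "P.prob (F i) = ?pS * (1 - ?pB) ^ (m - 1)" .
    qed
    also have "\<dots> = real m * ?pS * (1 - ?pB) ^ (m - 1)" by simp
    also have "\<dots> \<le> real m * ?pS * exp (- ?pB) ^ (m - 1)"
      by (intro mult_left_mono power_mono) (use exp_ge_add_one_self[of "- ?pB"] Q.prob_le_1 in auto)
    also have "exp (- ?pB) ^ (m - 1) = exp (- (real m - 1) * ?pB)"
      using \<open>m \<ge> 1\<close> by (simp add: exp_of_nat_mult[symmetric] of_nat_diff algebra_simps)
    finally show ?thesis using supn0 by (simp add: mult_left_mono mult.assoc)
  qed
  show ?thesis using p1 p2 p3 unfolding g_def by simp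
qed

end
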